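(* Let $n\geq 2$. Identify $H^\ast(BSO(2n-1))$ with the subring $\mathbb{Z}/2[\widehat{\omega_2},\dots,\widehat{\omega_{2n-1}}]$ of $H^\ast(BSO(2n))=\mathbb{Z}/2[\widehat{\omega_2},\dots,\widehat{\omega_{2n}}]$, so that $H^\ast(BSO(2n))\cong\bigoplus_{k\ge0}H^\ast(BSO(2n-1))\,\widehat{\omega_{2n}}^{k}$. Then for every $k\geq1$, $H^\ast(BSO(2n-1))\,\widehat{\omega_{2n}}^{k}$ is an $E$-submodule of $\tilde{H}^\ast(BSO(2n))$, and $\tilde{H}^\ast(BSO(2n-1))$ is an $E$-submodule of $\tilde{H}^\ast(BSO(2n))$.
   Context: Cohomology is with $\mathbb{Z}/2$ coefficients; $\widehat{\omega_i}$ denotes the $i$-th Stiefel–Whitney class. $E=\mathbb{Z}/2\langle Q_0,Q_1\rangle$ is the exterior subalgebra of the mod 2 Steenrod algebra generated by the Milnor primitives $Q_0=Sq^1$ and $Q_1=Sq^3+Sq^2Sq^1$, acting on cohomology via Steenrod operations. *)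

theory Defs
  imports "HOL-Library.Poly_Mapping" "HOL-Library.Z2"
begin

text \<open>Mod 2 cohomology H^*(BSO(m)) = Z/2[w_2,...,w_m], modelled as polynomials over the
  field bit = Z/2 in variables indexed by nat (variable i is the Stiefel-Whitney class w_i).\<close>

type_synonym mon = "nat \<Rightarrow>\<^sub>0 nat"
type_synonym poly = "mon \<Rightarrow>\<^sub>0 bit"

definition Var :: "nat \<Rightarrow> poly" where
  "Var i = Poly_Mapping.single (Poly_Mapping.single i 1) 1"

definition sw :: "nat \<Rightarrow> nat \<Rightarrow> poly" where
  "sw m i = (if i = 0 then 1 else if 2 \<le> i \<and> i \<le> m then Var i else 0)"

definition HBSO :: "nat \<Rightarrow> poly set" where
  "HBSO m = {p::poly. \<forall>mo \<in> Poly_Mapping.keys p. Poly_Mapping.keys mo \<subseteq> {2..m}}"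

definition HBSO_red :: "nat \<Rightarrow> poly set" where
  "HBSO_red m = {p \<in> HBSO m. Poly_Mapping.lookup p 0 = 0}"

definition mdeg :: "mon \<Rightarrow> nat" where
  "mdeg mo = (\<Sum>i\<in>Poly_Mapping.keys mo. i * Poly_Mapping.lookup mo i)"

definition hpart :: "nat \<Rightarrow> poly \<Rightarrow> poly" where
  "hpart d p = (\<Sum>mo\<in>Poly_Mapping.keys p. if mdeg mo = d then Poly_Mapping.single mo (Poly_Mapping.lookup p mo) else 0)"

text \<open>Wu formula in BSO(m): Sq^j w_i = sum_{t=0}^j binom(i-j+t-1, t) w_{j-t} w_{i+t} (j \<le> i),
  Sq^j w_i = 0 for j > i.\<close>
definition SqW :: "nat \<Rightarrow> nat \<Rightarrow> nat \<Rightarrow> poly" where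
  "SqW m j i = (if j \<le> i then
      (\<Sum>t=0..j. of_nat ((i - j + t - 1) choose t) * sw m (j - t) * sw m (i + t)) else 0)"

text \<open>Total Steenrod square of w_i, and (by the Cartan formula) of a monomial in the w_i.\<close>
definition TSqW :: "nat \<Rightarrow> nat \<Rightarrow> poly" where
  "TSqW m i = (\<Sum>j=0..i. SqW m j i)"

definition TSqMon :: "nat \<Rightarrow> mon \<Rightarrow> poly" where
  "TSqMon m mo = (\<Prod>i\<in>Poly_Mapping.keys mo. TSqW m i ^ Poly_Mapping.lookup mo i)"

definition Sq :: "nat \<Rightarrow> nat \<Rightarrow> poly \<Rightarrow> poly" where
  "Sq m j p = (\<Sum>mo\<in>Poly_Mapping.keys p. Poly_Mapping.single 0 (Poly_Mapping.lookup p mo) * hpart (mdeg mo + j) (TSqMon m mo))"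

definition Q0 :: "nat \<Rightarrow> poly \<Rightarrow> poly" where
  "Q0 m p = Sq m 1 p"

definition Q1 :: "nat \<Rightarrow> poly \<Rightarrow> poly" where
  "Q1 m p = Sq m 3 p + Sq m 2 (Sq m 1 p)"

text \<open>E-submodule of reduced H^*(BSO(m)): an additive subgroup (Z/2-subspace) closed under
  Q_0 and Q_1 (which generate E as an algebra).\<close>
definition E_submodule :: "nat \<Rightarrow> poly set \<Rightarrow> bool" where
  "E_submodule m M \<longleftrightarrow> M \<subseteq> HBSO_red m \<and> 0 \<in> M \<and> (\<forall>x\<in>M. \<forall>y\<in>M. x + y \<in> M)
     \<and> (\<forall>x\<in>M. Q0 m x \<in> M \<and> Q1 m x \<in> M)"

end

theory Submission
  imports Defs
begin


abbreviation lk where "lk \<equiv> Poly_Mapping.lookup"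
abbreviation ks where "ks \<equiv> Poly_Mapping.keys"
abbreviation sg where "sg \<equiv> Poly_Mapping.single"

lemma poly_induct[case_names zero add]:
  fixes P :: "('a \<Rightarrow>\<^sub>0 'b::monoid_add) \<Rightarrow> bool"
  assumes "P 0"
    and "\<And>f a b. a \<notin> ks f \<Longrightarrow> b \<noteq> 0 \<Longrightarrow> P f \<Longrightarrow> P (sg a b + f)"
  shows "P p"
proof (induct p rule: Poly_Mapping.update_induct)
  case const then show ?case using assms(1) by simp
next
  case (update f a b)
  have "Poly_Mapping.update a b f = sg a b + f"
    using update(1) by (intro poly_mapping_eqI)
      (auto simp: Poly_Mapping.lookup_update lookup_add Poly_Mapping.lookup_single when_def in_keys_iff)
  then show ?case using assms(2) update by simp
qed

lemma bit_add_self[simp]: "(a::bit) + a = 0" by (cases a) simp_all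

lemma poly_add_self[simp]: "(x::poly) + x = 0"
proof (intro poly_mapping_eqI)
  fix k show "lk (x + x) k = lk 0 k" unfolding lookup_add by (simp del: bit_add_self)
qed

lemma of_nat_poly: "(of_nat c :: poly) = (if even c then 0 else 1)"
  by (induct c) (auto simp: add.commute)

lemma poly_two[simp]: "(2::poly) = 0"
  using of_nat_poly[of 2] by simp

lemma lookup_hpart: "lk (hpart d p) mo = (if mdeg mo = d then lk p mo else 0)"
proof -
  have "lk (hpart d p) mo = (\<Sum>x\<in>ks p. if x = mo then (if mdeg mo = d then lk p mo else 0) else 0)"
    unfolding hpart_def lookup_sum
    by (intro sum.cong) (auto simp: Poly_Mapping.lookup_single when_def)
  also have "\<dots> = (if mdeg mo = d then lk p mo else 0)"
    by (cases "mo \<in> ks p") (auto simp: in_keys_iff)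
  finally show ?thesis .
qed

lemma hpart_add: "hpart d (p + q) = hpart d p + hpart d q"
  by (intro poly_mapping_eqI) (simp add: lookup_hpart lookup_add)

lemma hpart_zero[simp]: "hpart d 0 = 0"
  by (intro poly_mapping_eqI) (simp add: lookup_hpart)

lemma hpart_single: "hpart d (sg mo c) = (if mdeg mo = d then sg mo c else 0)"
  by (intro poly_mapping_eqI) (auto simp: lookup_hpart Poly_Mapping.lookup_single when_def)

lemma hpart_sum: "hpart d (sum F K) = (\<Sum>k\<in>K. hpart d (F k))"
  by (intro poly_mapping_eqI) (simp add: lookup_hpart lookup_sum)

lemma mdeg_superset: "finite K \<Longrightarrow> ks mo \<subseteq> K \<Longrightarrow> mdeg mo = (\<Sum>i\<in>K. i * lk mo i)"
  unfolding mdeg_def by (rule sum.mono_neutral_left) (auto simp: in_keys_iff)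

lemma mdeg_add: "mdeg (a + b) = mdeg a + mdeg b"
proof -
  let ?K = "ks a \<union> ks b"
  have "mdeg (a+b) = (\<Sum>i\<in>?K. i * lk (a+b) i)"
    using keys_add[of a b] by (intro mdeg_superset) auto
  also have "\<dots> = (\<Sum>i\<in>?K. i * lk a i) + (\<Sum>i\<in>?K. i * lk b i)"
    by (simp add: lookup_add algebra_simps sum.distrib)
  also have "\<dots> = mdeg a + mdeg b"
    using mdeg_superset[of ?K a] mdeg_superset[of ?K b] by simp
  finally show ?thesis .
qed

lemma mdeg_zero[simp]: "mdeg 0 = 0" by (simp add: mdeg_def)
lemma mdeg_single[simp]: "mdeg (sg i k) = i * k" by (simp add: mdeg_def)

lemma bilinear_eq:
  fixes F G :: "('a::comm_monoid_add \<Rightarrow>\<^sub>0 'b::semiring_0) \<Rightarrow> ('a \<Rightarrow>\<^sub>0 'b) \<Rightarrow> 'c::comm_monoid_add"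
  assumes F1: "\<And>f f' g. F (f + f') g = F f g + F f' g" and F2: "\<And>f g g'. F f (g + g') = F f g + F f g'"
    and F3: "\<And>g. F 0 g = 0" and F4: "\<And>f. F f 0 = 0"
    and G1: "\<And>f f' g. G (f + f') g = G f g + G f' g" and G2: "\<And>f g g'. G f (g + g') = G f g + G f g'"
    and G3: "\<And>g. G 0 g = 0" and G4: "\<And>f. G f 0 = 0"
    and S: "\<And>x y c e. c \<noteq> 0 \<Longrightarrow> e \<noteq> 0 \<Longrightarrow> F (sg x c) (sg y e) = G (sg x c) (sg y e)"
  shows "F f g = G f g"
proof (induct f rule: poly_induct)
  case zero then show ?case by (simp add: F3 G3)
next
  case (add f a b)
  note outer = this
  have "F (sg a b) g = G (sg a b) g"
  proof (induct g rule: poly_induct)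
    case zero then show ?case by (simp add: F4 G4)
  next
    case (add g a' b') then show ?case using outer(2) by (simp add: F2 G2 S)
  qed
  then show ?case using add by (simp add: F1 G1)
qed

lemma hpart_mult: "hpart d (f * g) = (\<Sum>a=0..d. hpart a f * hpart (d - a) g)"
proof (rule bilinear_eq[where F = "\<lambda>f g. hpart d (f * g)" and G = "\<lambda>f g. (\<Sum>a=0..d. hpart a f * hpart (d - a) g)"])
  fix x y :: mon and c e :: bit
  have "(\<Sum>a=0..d. hpart a (sg x c) * hpart (d - a) (sg y e))
      = (\<Sum>a=0..d. if a = mdeg x then (if mdeg y = d - mdeg x then sg (x+y) (c*e) else 0) else 0)"
    by (intro sum.cong) (auto simp: hpart_single mult_single)
  also have "\<dots> = hpart d (sg x c * sg y e)"
    by (auto simp: hpart_single mult_single mdeg_add)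
  finally show "hpart d (sg x c * sg y e) = (\<Sum>a=0..d. hpart a (sg x c) * hpart (d - a) (sg y e))" ..
qed (simp_all add: hpart_add algebra_simps sum.distrib)



lemma Sq_superset:
  assumes "finite K" "ks p \<subseteq> K"
  shows "Sq m j p = (\<Sum>mo\<in>K. sg 0 (lk p mo) * hpart (mdeg mo + j) (TSqMon m mo))"
  unfolding Sq_def using assms by (intro sum.mono_neutral_left) (auto simp: in_keys_iff)

lemma Sq_add: "Sq m j (p + q) = Sq m j p + Sq m j q"
proof -
  let ?K = "ks p \<union> ks q"
  have "Sq m j (p + q) = (\<Sum>mo\<in>?K. sg 0 (lk (p+q) mo) * hpart (mdeg mo + j) (TSqMon m mo))"
    using keys_add[of p q] by (intro Sq_superset) auto
  also have "\<dots> = (\<Sum>mo\<in>?K. sg 0 (lk p mo) * hpart (mdeg mo + j) (TSqMon m mo))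
      + (\<Sum>mo\<in>?K. sg 0 (lk q mo) * hpart (mdeg mo + j) (TSqMon m mo))"
    by (simp only: lookup_add single_add distrib_right sum.distrib)
  also have "\<dots> = Sq m j p + Sq m j q"
    using Sq_superset[of ?K p m j] Sq_superset[of ?K q m j] by simp
  finally show ?thesis .
qed

lemma Sq_zero[simp]: "Sq m j 0 = 0" by (simp add: Sq_def)

lemma Sq_single: "Sq m j (sg mo c) = sg 0 c * hpart (mdeg mo + j) (TSqMon m mo)"
  by (cases "c = 0") (simp_all add: Sq_def)

lemma Sq_sum: "Sq m j (sum F K) = (\<Sum>k\<in>K. Sq m j (F k))"
  by (induct K rule: infinite_finite_induct) (simp_all add: Sq_add)

lemma TSqMon_superset:
  assumes "finite K" "ks mo \<subseteq> K"
  shows "TSqMon m mo = (\<Prod>i\<in>K. TSqW m i ^ lk mo i)"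
  unfolding TSqMon_def using assms by (intro prod.mono_neutral_left) (auto simp: in_keys_iff)

lemma TSqMon_add: "TSqMon m (a + b) = TSqMon m a * TSqMon m b"
proof -
  let ?K = "ks a \<union> ks b"
  have "TSqMon m (a+b) = (\<Prod>i\<in>?K. TSqW m i ^ lk (a+b) i)"
    using keys_add[of a b] by (intro TSqMon_superset) auto
  also have "\<dots> = TSqMon m a * TSqMon m b"
    using TSqMon_superset[of ?K a] TSqMon_superset[of ?K b]
    by (simp add: lookup_add power_add prod.distrib)
  finally show ?thesis .
qed

lemma TSqMon_zero[simp]: "TSqMon m 0 = 1" by (simp add: TSqMon_def)
lemma TSqMon_single1: "TSqMon m (sg i 1) = TSqW m i" by (simp add: TSqMon_def)
lemma TSqMon_single1': "TSqMon m (sg i (Suc 0)) = TSqW m i" by (simp add: TSqMon_def)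

definition lowdeg :: "nat \<Rightarrow> poly \<Rightarrow> bool" where
  "lowdeg d f \<longleftrightarrow> (\<forall>e<d. hpart e f = 0)"
definition homog :: "nat \<Rightarrow> poly \<Rightarrow> bool" where
  "homog d f \<longleftrightarrow> (\<forall>e. e \<noteq> d \<longrightarrow> hpart e f = 0)"

lemma lowdeg_mult:
  assumes A: "lowdeg a f" and B: "lowdeg b g" shows "lowdeg (a + b) (f * g)"
  unfolding lowdeg_def hpart_mult
proof (intro allI impI sum.neutral ballI)
  fix e x assume e: "e < a + b" and x: "x \<in> {0..e}"
  show "hpart x f * hpart (e - x) g = 0"
  proof (cases "x < a")
    case True then show ?thesis using A by (simp add: lowdeg_def)
  next
    case False then have "e - x < b" using e x by auto
    then show ?thesis using B by (simp add: lowdeg_def)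
  qed
qed

lemma homog_mult:
  assumes A: "homog a f" and B: "homog b g" shows "homog (a + b) (f * g)"
  unfolding homog_def hpart_mult
proof (intro allI impI sum.neutral ballI)
  fix e x assume e: "e \<noteq> a + b" and x: "x \<in> {0..e}"
  show "hpart x f * hpart (e - x) g = 0"
  proof (cases "x = a")
    case False then show ?thesis using A by (simp add: homog_def)
  next
    case True then have "e - x \<noteq> b" using e x by auto
    then show ?thesis using B by (simp add: homog_def)
  qed
qed

lemma lowdeg_add: "lowdeg d f \<Longrightarrow> lowdeg d g \<Longrightarrow> lowdeg d (f + g)"
  by (simp add: lowdeg_def hpart_add)
lemma homog_add: "homog d f \<Longrightarrow> homog d g \<Longrightarrow> homog d (f + g)"
  by (simp add: homog_def hpart_add)
lemma lowdeg_sum: "(\<And>k. k \<in> K \<Longrightarrow> lowdeg d (F k)) \<Longrightarrow> lowdeg d (sum F K)"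
  by (simp add: lowdeg_def hpart_sum)
lemma homog_sum: "(\<And>k. k \<in> K \<Longrightarrow> homog d (F k)) \<Longrightarrow> homog d (sum F K)"
  by (simp add: homog_def hpart_sum)
lemma lowdeg_0: "lowdeg 0 f" by (simp add: lowdeg_def)
lemma homog_zero[simp]: "homog d 0" by (simp add: homog_def)
lemma homog_lowdeg: "homog d f \<Longrightarrow> d' \<le> d \<Longrightarrow> lowdeg d' f"
  by (simp add: homog_def lowdeg_def)
lemma homog_single: "homog (mdeg mo) (sg mo c)"
  by (simp add: homog_def hpart_single)
lemma homog_one: "homog 0 1"
  using homog_single[of 0 1] by simp
lemma homog_of_nat: "homog 0 (of_nat c)"
  using homog_one by (simp add: of_nat_poly)

lemma lowdeg_power: "lowdeg d f \<Longrightarrow> lowdeg (k * d) (f ^ k)"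
proof (induct k)
  case 0 then show ?case using homog_lowdeg[OF homog_one] by simp
next
  case (Suc k) then show ?case using lowdeg_mult[of d f "k*d" "f^k"] by (simp add: add.commute)
qed

lemma lowdeg_prod: "finite K \<Longrightarrow> (\<And>i. i \<in> K \<Longrightarrow> lowdeg (D i) (F i)) \<Longrightarrow> lowdeg (sum D K) (prod F K)"
proof (induct K rule: finite_induct)
  case empty then show ?case using homog_lowdeg[OF homog_one] by simp
next
  case (insert x K) then show ?case by (simp add: lowdeg_mult)
qed

lemma homog_sw: "homog a (sw m a)"
  unfolding sw_def Var_def using homog_single[of "sg a 1" 1] homog_one by auto

lemma homog_SqW_term:
  assumes "t \<in> {0..j}" 
  shows "homog (i + j) (of_nat ((i - j + t - 1) choose t) * sw m (j - t) * sw m (i + t))"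
proof -
  from assms have "i + j = 0 + (j - t) + (i + t)" by auto
  then show "homog (i + j) (of_nat ((i - j + t - 1) choose t) * sw m (j - t) * sw m (i + t))"
    by (subst \<open>i + j = _\<close>) (intro homog_mult homog_of_nat homog_sw)
qed

lemma homog_SqW: "homog (i + j) (SqW m j i)"
  unfolding SqW_def
  apply (split if_split)
  apply (intro conjI impI homog_sum homog_SqW_term)
   apply assumption
  apply simp
  done

lemma lowdeg_TSqW: "lowdeg i (TSqW m i)"
  unfolding TSqW_def by (intro lowdeg_sum homog_lowdeg[OF homog_SqW]) simp

lemma lowdeg_TSqMon: "lowdeg (mdeg mo) (TSqMon m mo)"
  unfolding TSqMon_def mdeg_def
proof (intro lowdeg_prod)
  fix i have "lowdeg (lk mo i * i) (TSqW m i ^ lk mo i)"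
    by (rule lowdeg_power[OF lowdeg_TSqW])
  then show "lowdeg (i * lk mo i) (TSqW m i ^ lk mo i)" by (simp add: mult.commute)
qed simp

lemma hpart_homog:
  assumes h: "homog d f" shows "hpart d f = f"
proof (intro poly_mapping_eqI)
  fix mo
  show "lk (hpart d f) mo = lk f mo"
  proof (cases "mdeg mo = d")
    case True then show ?thesis by (simp add: lookup_hpart)
  next
    case False
    then have "hpart (mdeg mo) f = 0" using h by (simp add: homog_def)
    then have "lk (hpart (mdeg mo) f) mo = 0" by simp
    then show ?thesis using False by (simp add: lookup_hpart)
  qed
qed

lemma Sq_mon: "Sq m j (sg mo 1) = hpart (mdeg mo + j) (TSqMon m mo)"
  by (simp add: Sq_single)

lemma Cartan_mon:
  "Sq m j (sg (a + b) 1) = (\<Sum>i=0..j. Sq m i (sg a 1) * Sq m (j - i) (sg b 1))"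
proof -
  let ?A = "TSqMon m a" and ?B = "TSqMon m b" and ?da = "mdeg a" and ?db = "mdeg b"
  let ?f = "\<lambda>e. hpart e ?A * hpart (?da + ?db + j - e) ?B"
  have "Sq m j (sg (a + b) 1) = (\<Sum>e=0..?da + ?db + j. ?f e)"
    by (simp add: Sq_mon mdeg_add TSqMon_add hpart_mult)
  also have "\<dots> = (\<Sum>e=?da..?da + j. ?f e)"
  proof -
    have Z: "\<forall>e\<in>{0..?da + ?db + j} - {?da..?da + j}. ?f e = 0"
    proof
      fix e assume "e \<in> {0..?da + ?db + j} - {?da..?da + j}"
      then have "e < ?da \<or> ?da + ?db + j - e < ?db" by auto
      then show "?f e = 0" using lowdeg_TSqMon[of a m] lowdeg_TSqMon[of b m]
        unfolding lowdeg_def by auto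
    qed
    show ?thesis by (rule sum.mono_neutral_right[OF _ _ Z]) auto
  qed
  also have "\<dots> = (\<Sum>i=0..j. ?f (i + ?da))"
    using sum.shift_bounds_cl_nat_ivl[of ?f 0 ?da j] by (simp add: add.commute)
  also have "\<dots> = (\<Sum>i=0..j. Sq m i (sg a 1) * Sq m (j - i) (sg b 1))"
    by (intro sum.cong) (auto simp: Sq_mon add.commute)
  finally show ?thesis .
qed

lemma Cartan: "Sq m j (p * q) = (\<Sum>i=0..j. Sq m i p * Sq m (j - i) q)"
proof (rule bilinear_eq[where F = "\<lambda>p q. Sq m j (p * q)" and G = "\<lambda>p q. (\<Sum>i=0..j. Sq m i p * Sq m (j - i) q)"])
  fix x y :: mon and c e :: bit
  assume "c \<noteq> 0" "e \<noteq> 0"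
  then show "Sq m j (sg x c * sg y e) = (\<Sum>i=0..j. Sq m i (sg x c) * Sq m (j - i) (sg y e))"
    by (simp add: mult_single Cartan_mon)
qed (simp_all add: Sq_add algebra_simps sum.distrib)

lemma Sq_Var: "Sq m j (Var i) = SqW m j i"
proof -
  have "Sq m j (Var i) = hpart (i + j) (TSqW m i)"
    by (simp add: Var_def Sq_mon TSqMon_single1 TSqMon_single1')
  also have "\<dots> = (\<Sum>j'=0..i. if j' = j then SqW m j' i else 0)"
    unfolding TSqW_def hpart_sum
  proof (intro sum.cong refl)
    fix j' show "hpart (i + j) (SqW m j' i) = (if j' = j then SqW m j' i else 0)"
    proof (cases "j' = j")
      case True then show ?thesis using hpart_homog[OF homog_SqW] by simp
    next
      case False then show ?thesis using homog_SqW[of i j' m] unfolding homog_def by simp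
    qed
  qed
  also have "\<dots> = SqW m j i" by (simp add: SqW_def)
  finally show ?thesis .
qed

lemma Sq_one: "Sq m j 1 = (if j = 0 then 1 else 0)"
proof -
  have "Sq m j (sg 0 1) = hpart j 1"
    unfolding Sq_mon by simp
  also have "\<dots> = (if j = 0 then 1 else 0)"
    using hpart_single[of j 0 1] by (auto split: if_splits)
  finally show ?thesis by simp
qed



declare One_nat_def[simp del] of_nat_diff[simp del]

lemma keys_single_add:
  fixes f :: "'a \<Rightarrow>\<^sub>0 'b::monoid_add"
  assumes "i \<notin> ks f" "b \<noteq> 0"
  shows "ks (sg i b + f) = insert i (ks f)"
  using assms by (auto simp: in_keys_iff lookup_add Poly_Mapping.lookup_single when_def split: if_splits)

lemma HBSO_zero[simp]: "0 \<in> HBSO m" by (simp add: HBSO_def)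
lemma HBSO_one[simp]: "1 \<in> HBSO m" by (simp add: HBSO_def)
lemma HBSO_add: "p \<in> HBSO m \<Longrightarrow> q \<in> HBSO m \<Longrightarrow> p + q \<in> HBSO m"
  using keys_add[of p q] by (auto simp: HBSO_def)
lemma HBSO_mult: "p \<in> HBSO m \<Longrightarrow> q \<in> HBSO m \<Longrightarrow> p * q \<in> HBSO m"
  unfolding HBSO_def
proof safe
  fix mo i assume p: "\<forall>mo\<in>ks p. ks mo \<subseteq> {2..m}" and q: "\<forall>mo\<in>ks q. ks mo \<subseteq> {2..m}"
    and mo: "mo \<in> ks (p * q)" and i: "i \<in> ks mo"
  from mo keys_mult[of p q] obtain a b where "mo = a + b" "a \<in> ks p" "b \<in> ks q" by blast
  with i keys_add[of a b] p q show "i \<in> {2..m}" by blast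
qed
lemma HBSO_sum: "(\<And>k. k \<in> K \<Longrightarrow> F k \<in> HBSO m) \<Longrightarrow> sum F K \<in> HBSO m"
  by (induct K rule: infinite_finite_induct) (auto intro: HBSO_add)
lemma HBSO_power: "p \<in> HBSO m \<Longrightarrow> p ^ k \<in> HBSO m"
  by (induct k) (auto intro: HBSO_mult)
lemma HBSO_mono: assumes "m \<le> m'" "p \<in> HBSO m" shows "p \<in> HBSO m'"
proof -
  have "{2..m} \<subseteq> {2..m'}" using assms(1) by auto
  then show ?thesis using assms(2) unfolding HBSO_def by blast
qed
lemma HBSO_Var: "i \<in> {2..m} \<Longrightarrow> Var i \<in> HBSO m"
  by (simp add: HBSO_def Var_def)
lemma HBSO_of_nat[simp]: "of_nat c \<in> HBSO m"
  by (simp add: of_nat_poly)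
lemma HBSO_sw: "a \<le> m' \<or> m < a \<Longrightarrow> sw m a \<in> HBSO m'"
  by (auto simp: sw_def HBSO_Var)
lemma HBSO_sw_same: "sw m a \<in> HBSO m"
  by (rule HBSO_sw) auto
lemma HBSO_SqW: "SqW m j i \<in> HBSO m"
  unfolding SqW_def by (auto intro!: HBSO_sum HBSO_mult HBSO_sw_same)

lemma HBSO_mon: "ks a \<subseteq> {2..m} \<Longrightarrow> sg a 1 \<in> HBSO m"
  by (simp add: HBSO_def)

lemma HBSO_induct[consumes 1, case_names zero one add var]:
  assumes p: "p \<in> HBSO m" and P0: "P 0" and P1: "P 1"
    and Padd: "\<And>x y. x \<in> HBSO m \<Longrightarrow> y \<in> HBSO m \<Longrightarrow> P x \<Longrightarrow> P y \<Longrightarrow> P (x + y)"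
    and Pvar: "\<And>i x. i \<in> {2..m} \<Longrightarrow> x \<in> HBSO m \<Longrightarrow> P x \<Longrightarrow> P (Var i * x)"
  shows "P p"
proof -
  have mon: "ks a \<subseteq> {2..m} \<longrightarrow> P (sg a 1)" for a :: mon
  proof (induct a rule: poly_induct)
    case zero then show ?case using P1 by simp
  next
    case (add f i e)
    show ?case
    proof
      assume ks: "ks (sg i e + f) \<subseteq> {2..m}"
      with add(1,2) have i: "i \<in> {2..m}" and kf: "ks f \<subseteq> {2..m}"
        by (auto simp: keys_single_add)
      have "P (sg (sg i e' + f) 1)" for e'
      proof (induct e')
        case 0 then show ?case using add(3) kf by simp
      next
        case (Suc e')
        have eq: "sg (sg i (Suc e') + f) 1 = Var i * sg (sg i e' + f) 1"
          by (simp add: Var_def mult_single single_add[symmetric] add.assoc[symmetric] Suc_eq_plus1_left)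
        have "ks (sg i e') \<subseteq> {i}" by simp
        then have "ks (sg i e' + f) \<subseteq> {2..m}"
          using keys_add[of "sg i e'" f] i kf by blast
        then show ?case unfolding eq using Pvar[OF i HBSO_mon Suc] by simp
      qed
      then show "P (sg (sg i e + f) 1)" .
    qed
  qed
  have "p \<in> HBSO m \<longrightarrow> P p"
  proof (induct p rule: poly_induct)
    case zero then show ?case using P0 by simp
  next
    case (add f a b)
    show ?case
    proof
      assume h: "sg a b + f \<in> HBSO m"
      then have b1: "b = 1" using add(2) by simp
      from h add(1,2) have ka: "ks a \<subseteq> {2..m}" and fH: "f \<in> HBSO m"
        by (auto simp: HBSO_def keys_single_add)
      show "P (sg a b + f)" unfolding b1
        using Padd[OF HBSO_mon[OF ka] fH] mon[of a] ka add(3) fH by simp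
    qed
  qed
  with p show ?thesis by simp
qed

lemma mon_add_eq_0: "(x::mon) + y = 0 \<Longrightarrow> x = 0"
  by (metis add_is_0 lookup_add lookup_zero poly_mapping_eqI)

lemma lookup_mult_0: "lk ((f::poly) * g) 0 = lk f 0 * lk g 0"
proof (rule bilinear_eq[where F = "\<lambda>f g. lk (f * g) 0" and G = "\<lambda>f g. lk f 0 * lk g 0"])
  fix x y :: mon and c e :: bit
  show "lk (sg x c * sg y e) 0 = lk (sg x c) 0 * lk (sg y e) 0"
    using mon_add_eq_0[of x y] mon_add_eq_0[of y x]
    by (auto simp: mult_single Poly_Mapping.lookup_single when_def add.commute)
qed (simp_all only: distrib_left distrib_right lookup_add mult_zero_left mult_zero_right lookup_zero)

lemma lookup_power_0: "lk ((f::poly) ^ k) 0 = lk f 0 ^ k"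
  by (induct k) (simp_all add: lookup_mult_0)

lemma Sq_lookup0: "0 < j \<Longrightarrow> lk (Sq m j p) 0 = 0"
  unfolding Sq_def lookup_sum
  by (intro sum.neutral) (simp add: lookup_mult_0 lookup_hpart)

lemma Cartan1: "Sq m 1 (p * q) = Sq m 0 p * Sq m 1 q + Sq m 1 p * Sq m 0 q"
  by (simp add: Cartan eval_nat_numeral One_nat_def sum.atLeast0_atMost_Suc)
lemma Cartan2: "Sq m 2 (p * q) = Sq m 0 p * Sq m 2 q + Sq m 1 p * Sq m 1 q + Sq m 2 p * Sq m 0 q"
  by (simp add: Cartan eval_nat_numeral One_nat_def sum.atLeast0_atMost_Suc)
lemma Cartan3: "Sq m 3 (p * q) = Sq m 0 p * Sq m 3 q + Sq m 1 p * Sq m 2 q + Sq m 2 p * Sq m 1 q + Sq m 3 p * Sq m 0 q"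
  by (simp add: Cartan eval_nat_numeral One_nat_def sum.atLeast0_atMost_Suc)
lemma sum01: "(\<Sum>i=0..(1::nat). f i) = f 0 + (f 1 :: poly)" by (simp add: eval_nat_numeral One_nat_def sum.atLeast0_atMost_Suc)
lemma sum02: "(\<Sum>i=0..(2::nat). f i) = f 0 + f 1 + (f 2 :: poly)" by (simp add: eval_nat_numeral One_nat_def sum.atLeast0_atMost_Suc)
lemma sum03: "(\<Sum>i=0..(3::nat). f i) = f 0 + f 1 + f 2 + (f 3 :: poly)" by (simp add: eval_nat_numeral One_nat_def sum.atLeast0_atMost_Suc)

lemma SqW0: "i \<in> {2..m} \<Longrightarrow> SqW m 0 i = Var i"
  by (simp add: SqW_def sw_def)

lemma Sq0_id: "x \<in> HBSO m \<Longrightarrow> Sq m 0 x = x"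
proof (induct x rule: HBSO_induct)
  case (var i x) then show ?case by (simp add: Cartan Sq_Var SqW0)
qed (simp_all add: Sq_one Sq_add)

lemma Sq_HBSO: "x \<in> HBSO m \<Longrightarrow> Sq m j x \<in> HBSO m"
proof (induct x arbitrary: j rule: HBSO_induct)
  case (var i x) then show ?case
    by (simp add: Cartan Sq_Var) (intro HBSO_sum HBSO_mult HBSO_SqW, simp)
qed (simp_all add: Sq_one Sq_add HBSO_add)

lemma Sq_of_nat_mult: "Sq m j (of_nat c * x) = of_nat c * Sq m j x"
  by (simp add: of_nat_poly)

lemma Sq_sw: "Sq m j (sw m a) = (if a = 0 then (if j = 0 then 1 else 0) else if 2 \<le> a \<and> a \<le> m then SqW m j a else 0)"
  by (simp add: sw_def Sq_one Sq_Var)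

lemma SqW1: "1 \<le> i \<Longrightarrow> SqW m 1 i = of_nat (i - 1) * sw m (i + 1)"
  by (simp add: SqW_def sw_def choose_one One_nat_def sum.atLeast0_atMost_Suc)

lemma Sq1_deriv: "x \<in> HBSO m \<Longrightarrow> y \<in> HBSO m \<Longrightarrow> Sq m 1 (x * y) = Sq m 1 x * y + x * Sq m 1 y"
  by (simp add: Cartan1 Sq0_id)

lemma Sq1Sq1_Var:
  assumes i: "i \<in> {2..m}" shows "Sq m 1 (Sq m 1 (Var i)) = 0"
proof -
  have "Sq m 1 (Sq m 1 (Var i)) = of_nat (i - 1) * Sq m 1 (sw m (i + 1))"
    using i by (simp add: Sq_Var SqW1 Sq_of_nat_mult)
  also have "\<dots> = 0"
  proof (cases "i + 1 \<le> m")
    case True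
    have "Sq m 1 (sw m (i + 1)) = of_nat i * sw m (i + 1 + 1)"
      using True i by (simp add: Sq_sw SqW1)
    moreover have "of_nat (i - 1) * (of_nat i :: poly) = 0"
    proof -
      have "even ((i - 1) * i)" by simp
      then have "(of_nat ((i - 1) * i) :: poly) = 0" by (simp add: of_nat_poly)
      then show ?thesis by (simp only: of_nat_mult)
    qed
    ultimately show ?thesis by (simp add: mult.assoc[symmetric])
  next
    case False then show ?thesis by (simp add: sw_def)
  qed
  finally show ?thesis .
qed

lemma Sq1Sq1: "x \<in> HBSO m \<Longrightarrow> Sq m 1 (Sq m 1 x) = 0"
proof (induct x rule: HBSO_induct)
  case (var i x)
  have V: "Var i \<in> HBSO m" using var(1) by (rule HBSO_Var)
  have S1V: "Sq m 1 (Var i) \<in> HBSO m" and S1x: "Sq m 1 x \<in> HBSO m"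
    using V var(2) by (simp_all add: Sq_HBSO)
  have "Sq m 1 (Sq m 1 (Var i * x)) = Sq m 1 (Sq m 1 (Var i) * x + Var i * Sq m 1 x)"
    using V var(2) by (simp add: Sq1_deriv)
  also have "\<dots> = Sq m 1 (Sq m 1 (Var i)) * x + Sq m 1 (Var i) * Sq m 1 x
       + (Sq m 1 (Var i) * Sq m 1 x + Var i * Sq m 1 (Sq m 1 x))"
    using V var(2) S1V S1x by (simp add: Sq_add Sq1_deriv)
  also have "\<dots> = Sq m 1 (Var i) * Sq m 1 x + Sq m 1 (Var i) * Sq m 1 x"
    using var(1,3) by (simp add: Sq1Sq1_Var)
  also have "\<dots> = 0" by (rule poly_add_self)
  finally show ?case .
qed (simp_all add: Sq_one Sq_add)

lemma char2_aux: "(a::poly) + b + c + d + ((b + e) + (f + c)) = (d + e) + (a + f)"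
proof -
  have "(a + b + c + d + ((b + e) + (f + c))) - ((d + e) + (a + f)) = 2 * (b + c)"
    by (simp add: algebra_simps)
  then show ?thesis by simp
qed

lemma Q1_deriv:
  assumes x: "x \<in> HBSO m" and y: "y \<in> HBSO m"
  shows "Q1 m (x * y) = Q1 m x * y + x * Q1 m y"
proof -
  have x1: "Sq m 1 x \<in> HBSO m" and y1: "Sq m 1 y \<in> HBSO m" using x y by (simp_all add: Sq_HBSO)
  have A: "Sq m 3 (x * y) = x * Sq m 3 y + Sq m 1 x * Sq m 2 y + Sq m 2 x * Sq m 1 y + Sq m 3 x * y"
    using x y by (simp add: Cartan3 Sq0_id)
  have B: "Sq m 2 (Sq m 1 x * y) = Sq m 1 x * Sq m 2 y + Sq m 2 (Sq m 1 x) * y"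
    unfolding Cartan2 using x y x1 by (simp add: Sq0_id Sq1Sq1)
  have C: "Sq m 2 (x * Sq m 1 y) = x * Sq m 2 (Sq m 1 y) + Sq m 2 x * Sq m 1 y"
    unfolding Cartan2 using x y y1 by (simp add: Sq0_id Sq1Sq1)
  have D: "Sq m 2 (Sq m 1 (x * y)) = Sq m 2 (Sq m 1 x * y) + Sq m 2 (x * Sq m 1 y)"
    using x y by (simp only: Sq1_deriv Sq_add)
  have E: "Q1 m (x * y) = x * Sq m 3 y + Sq m 1 x * Sq m 2 y + Sq m 2 x * Sq m 1 y + Sq m 3 x * y
     + ((Sq m 1 x * Sq m 2 y + Sq m 2 (Sq m 1 x) * y) + (x * Sq m 2 (Sq m 1 y) + Sq m 2 x * Sq m 1 y))"
    unfolding Q1_def by (simp only: A D B C)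
  have F: "Q1 m x * y + x * Q1 m y = Sq m 3 x * y + Sq m 2 (Sq m 1 x) * y + (x * Sq m 3 y + x * Sq m 2 (Sq m 1 y))"
    unfolding Q1_def by (simp only: distrib_left distrib_right)
  show ?thesis unfolding E F by (rule char2_aux)
qed



lemma deriv_zero: fixes D :: "poly \<Rightarrow> poly" assumes Dadd: "\<And>x y. D (x + y) = D x + D y" shows "D 0 = (0::poly)"
  using Dadd[of 0 0] by simp

lemma deriv_closed:
  fixes D :: "poly \<Rightarrow> poly"
  assumes Dadd: "\<And>x y. D (x + y) = D x + D y"
    and der: "\<And>x y. x \<in> HBSO m \<Longrightarrow> y \<in> HBSO m \<Longrightarrow> D (x * y) = D x * y + x * D y"
    and one: "D 1 = 0" and gen: "\<And>i. i \<in> {2..m'} \<Longrightarrow> D (Var i) \<in> HBSO m'" and mm: "m' \<le> m"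
    and x: "x \<in> HBSO m'"
  shows "D x \<in> HBSO m'"
  using x
proof (induct x rule: HBSO_induct)
  case zero then show ?case using deriv_zero[OF Dadd] by simp
next
  case one then show ?case using assms(3) by simp
next
  case (add x y) then show ?case by (simp add: Dadd HBSO_add)
next
  case (var i x)
  have "Var i \<in> HBSO m" using var(1) mm by (intro HBSO_Var) auto
  moreover have "x \<in> HBSO m" using var(2) mm HBSO_mono by blast
  ultimately have "D (Var i * x) = D (Var i) * x + Var i * D x" by (rule der)
  then show ?case using var gen HBSO_Var by (simp add: HBSO_add HBSO_mult)
qed

lemma deriv_pow:
  fixes D :: "poly \<Rightarrow> poly"
  assumes der: "\<And>x y. x \<in> HBSO m \<Longrightarrow> y \<in> HBSO m \<Longrightarrow> D (x * y) = D x * y + x * D y"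
    and one: "D 1 = 0" and w: "w \<in> HBSO m" and s: "s \<in> HBSO m'" and Dw: "D w = s * w"
  shows "\<exists>s'\<in>HBSO m'. D (w ^ k) = s' * w ^ k"
proof (induct k)
  case 0 show ?case using one by (intro bexI[of _ 0]) auto
next
  case (Suc k)
  then obtain s' where s': "s' \<in> HBSO m'" "D (w ^ k) = s' * w ^ k" by blast
  have "D (w ^ Suc k) = D (w * w ^ k)" by simp
  also have "\<dots> = D w * w ^ k + w * D (w ^ k)" using w HBSO_power[OF w] by (rule der)
  also have "\<dots> = (s + s') * w ^ Suc k" using Dw s' by (simp add: algebra_simps)
  finally show ?case using s s' HBSO_add by blast
qed

lemma deriv_Mk:
  fixes D :: "poly \<Rightarrow> poly"
  assumes Dadd: "\<And>x y. D (x + y) = D x + D y"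
    and der: "\<And>x y. x \<in> HBSO m \<Longrightarrow> y \<in> HBSO m \<Longrightarrow> D (x * y) = D x * y + x * D y"
    and one: "D 1 = 0" and gen: "\<And>i. i \<in> {2..m'} \<Longrightarrow> D (Var i) \<in> HBSO m'" and mm: "m' \<le> m"
    and w: "w \<in> HBSO m" and s: "s \<in> HBSO m'" and Dw: "D w = s * w"
    and q: "q \<in> HBSO m'"
  shows "\<exists>q'\<in>HBSO m'. D (q * w ^ k) = q' * w ^ k"
proof -
  obtain s' where s': "s' \<in> HBSO m'" "D (w ^ k) = s' * w ^ k"
    using deriv_pow[OF der one w s Dw] by blast
  have qm: "q \<in> HBSO m" using q mm HBSO_mono by blast
  have "D (q * w ^ k) = D q * w ^ k + q * D (w ^ k)" using qm HBSO_power[OF w] by (rule der)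
  also have "\<dots> = (D q + q * s') * w ^ k" using s' by (simp add: algebra_simps)
  finally show ?thesis
    using deriv_closed[OF Dadd der one gen mm q] q s' by (blast intro: HBSO_add HBSO_mult)
qed

lemma even_choose3: "even ((2 * a) choose 3)"
proof (induct a)
  case 0 show ?case by (simp add: numeral_3_eq_3)
next
  case (Suc a)
  let ?N = "2 * a"
  have n3: "(3::nat) = Suc 2" and n2: "(2::nat) = Suc 1" by simp_all
  have e1: "(Suc (Suc ?N)) choose (Suc 2) = ((Suc ?N) choose 2) + ((Suc ?N) choose (Suc 2))" by (rule binomial_Suc_Suc)
  have e2: "(Suc ?N) choose (Suc 1) = (?N choose 1) + (?N choose (Suc 1))" by (rule binomial_Suc_Suc)
  have e3: "(Suc ?N) choose (Suc 2) = (?N choose 2) + (?N choose (Suc 2))" by (rule binomial_Suc_Suc)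
  have "2 * Suc a = Suc (Suc ?N)" by simp
  then have "(2 * Suc a) choose 3 = (?N choose 1) + 2 * (?N choose 2) + (?N choose 3)"
    using e1 e2 e3 unfolding n3[symmetric] n2[symmetric] by simp
  moreover have "?N choose 1 = ?N" by (rule choose_one)
  ultimately show ?case using Suc by simp
qed

lemma of_nat_even0: "even c \<Longrightarrow> (of_nat c :: poly) = 0"
  by (simp add: of_nat_poly)

lemma sw0[simp]: "sw m 0 = 1" by (simp add: sw_def)
lemma sw1[simp]: "sw m 1 = 0" by (simp add: sw_def)
lemma sw1'[simp]: "sw m (Suc 0) = 0" by (simp add: sw_def)

lemma SqW3:
  assumes "3 \<le> i"
  shows "SqW m 3 i = sw m 3 * sw m i + of_nat (i - 3) * sw m 2 * sw m (i + 1)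
     + of_nat ((i - 1) choose 3) * sw m (i + 3)"
proof -
  have e: "i - 3 + 1 - 1 = i - 3" "i - 3 + 2 - 1 = i - 2" "i - 3 + 3 - 1 = i - 1" "i - 3 + 0 - 1 = i - 4"
    using assms by arith+
  have "SqW m 3 i = (\<Sum>t=0..3. of_nat ((i - 3 + t - 1) choose t) * sw m (3 - t) * sw m (i + t))"
    using assms by (simp add: SqW_def)
  also have "\<dots> = sw m 3 * sw m i + of_nat (i - 3) * sw m 2 * sw m (i + 1)
     + of_nat ((i - 1) choose 3) * sw m (i + 3)"
  proof -
    have f: "(3::nat) - 0 = 3" "(3::nat) - 1 = 2" "(3::nat) - 2 = 1" "(3::nat) - 3 = 0" by simp_all
    show ?thesis unfolding sum03
      by (simp only: e f binomial_n_0 choose_one sw0 sw1 of_nat_1 mult_1_left mult_1_right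
          mult_zero_left mult_zero_right add_0_right add_0_left)
  qed
  finally show ?thesis .
qed

lemma SqW2:
  assumes "2 \<le> i"
  shows "SqW m 2 i = sw m 2 * sw m i + of_nat ((i - 1) choose 2) * sw m (i + 2)"
proof -
  have e: "i - 2 + 2 - 1 = i - 1" "i - 2 + 0 - 1 = i - 3"
    using assms by arith+
  have "SqW m 2 i = (\<Sum>t=0..2. of_nat ((i - 2 + t - 1) choose t) * sw m (2 - t) * sw m (i + t))"
    using assms by (simp add: SqW_def)
  also have "\<dots> = sw m 2 * sw m i + of_nat ((i - 1) choose 2) * sw m (i + 2)"
  proof -
    have f: "(2::nat) - 0 = 2" "(2::nat) - 1 = 1" "(2::nat) - 2 = 0" by simp_all
    show ?thesis unfolding sum02
      by (simp only: e f binomial_n_0 choose_one sw0 sw1 of_nat_1 mult_1_left mult_1_right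
          mult_zero_left mult_zero_right add_0_right add_0_left)
  qed
  finally show ?thesis .
qed

lemma Q1_Var: "2 \<le> i \<Longrightarrow> Q1 m (Var i) = SqW m 3 i + of_nat (i - 1) * Sq m 2 (sw m (i + 1))"
  by (simp add: Q1_def Sq_Var SqW1 Sq_of_nat_mult)

context
  fixes n :: nat
  assumes n: "n \<ge> 2"
begin

lemma sw_S: "a \<noteq> 2 * n \<Longrightarrow> sw (2 * n) a \<in> HBSO (2 * n - 1)"
  by (rule HBSO_sw) auto

lemma Q0_gen: "i \<in> {2..2 * n - 1} \<Longrightarrow> Q0 (2 * n) (Var i) \<in> HBSO (2 * n - 1)"
proof -
  assume i: "i \<in> {2..2 * n - 1}"
  have "Q0 (2 * n) (Var i) = of_nat (i - 1) * sw (2 * n) (i + 1)"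
    using i by (simp add: Q0_def Sq_Var SqW1)
  moreover have "of_nat (i - 1) * sw (2 * n) (i + 1) \<in> HBSO (2 * n - 1)"
  proof (cases "i + 1 = 2 * n")
    case True then have "even (i - 1)" by presburger
    then show ?thesis by (simp add: of_nat_even0)
  next
    case False then show ?thesis by (intro HBSO_mult HBSO_of_nat sw_S)
  qed
  ultimately show ?thesis by simp
qed

lemma Q0_w: "Q0 (2 * n) (Var (2 * n)) = 0 * Var (2 * n)"
proof -
  have z1: "sw (2 * n) (2 * n + 1) = 0" by (simp add: sw_def)
  show ?thesis using n by (simp add: Q0_def Sq_Var SqW1 z1)
qed

lemma Q1_gen: "i \<in> {2..2 * n - 1} \<Longrightarrow> Q1 (2 * n) (Var i) \<in> HBSO (2 * n - 1)"
proof -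
  assume i: "i \<in> {2..2 * n - 1}"
  let ?S = "HBSO (2 * n - 1)"
  have P1: "SqW (2 * n) 3 i \<in> ?S"
  proof (cases "3 \<le> i")
    case False then show ?thesis by (simp add: SqW_def)
  next
    case True
    have a: "sw (2 * n) 3 * sw (2 * n) i \<in> ?S"
      using n i by (intro HBSO_mult sw_S) auto
    have b: "of_nat (i - 3) * sw (2 * n) 2 * sw (2 * n) (i + 1) \<in> ?S"
    proof (cases "i + 1 = 2 * n")
      case True then have "even (i - 3)" by presburger
      then show ?thesis by (simp add: of_nat_even0)
    next
      case False then show ?thesis using n by (intro HBSO_mult HBSO_of_nat sw_S) auto
    qed
    have c: "of_nat ((i - 1) choose 3) * sw (2 * n) (i + 3) \<in> ?S"
    proof (cases "i + 3 = 2 * n")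
      case True then have "i - 1 = 2 * (n - 2)" by arith
      then have "even ((i - 1) choose 3)" using even_choose3 by simp
      then show ?thesis by (simp add: of_nat_even0)
    next
      case False then show ?thesis by (intro HBSO_mult HBSO_of_nat sw_S)
    qed
    show ?thesis unfolding SqW3[OF True] using a b c by (intro HBSO_add)
  qed
  have P2: "of_nat (i - 1) * Sq (2 * n) 2 (sw (2 * n) (i + 1)) \<in> ?S"
  proof (cases "even (i - 1)")
    case True then show ?thesis by (simp add: of_nat_even0)
  next
    case False
    then have ne: "i + 1 \<noteq> 2 * n" "i + 3 \<noteq> 2 * n" by presburger+
    then have le: "i + 1 \<le> 2 * n" using i by auto
    have "Sq (2 * n) 2 (sw (2 * n) (i + 1)) = SqW (2 * n) 2 (i + 1)"
      using i le by (simp add: Sq_sw)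
    also have "\<dots> = sw (2 * n) 2 * sw (2 * n) (i + 1) + of_nat (i choose 2) * sw (2 * n) (i + 3)"
    proof -
      have e1: "i + 1 + 2 = i + 3" "i + 1 - 1 = i" by simp_all
      show ?thesis by (rule SqW2[of "i + 1" "2 * n", unfolded e1]) (use i in simp)
    qed
    finally have eq: "Sq (2 * n) 2 (sw (2 * n) (i + 1)) = \<dots>" .
    show ?thesis unfolding eq using n ne
      by (intro HBSO_mult HBSO_add HBSO_of_nat sw_S) auto
  qed
  show ?thesis using i P1 P2 by (simp add: Q1_Var HBSO_add)
qed

lemma Q1_w: "Q1 (2 * n) (Var (2 * n)) = Var 3 * Var (2 * n)"
proof -
  have z1: "sw (2 * n) (2 * n + 1) = 0" "sw (2 * n) (2 * n + 3) = 0" by (simp_all add: sw_def)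
  have z2: "sw (2 * n) 3 = Var 3" "sw (2 * n) (2 * n) = Var (2 * n)" using n by (simp_all add: sw_def)
  have "Q1 (2 * n) (Var (2 * n)) = SqW (2 * n) 3 (2 * n)"
    using n by (simp add: Q1_Var z1)
  also have "\<dots> = Var 3 * Var (2 * n)"
    using n by (simp add: SqW3 z1 z2)
  finally show ?thesis .
qed

end



lemma lk_Var0: "lk (Var i) 0 = 0"
proof -
  have "sg i (1::nat) \<noteq> 0" by (metis lookup_single_eq lookup_zero one_neq_zero)
  then show ?thesis by (simp add: Var_def Poly_Mapping.lookup_single when_def)
qed

theorem lemma1:
  fixes n :: nat
  assumes "n \<ge> 2"
  shows "(\<forall>k::nat. k \<ge> 1 \<longrightarrow>
            E_submodule (2*n) {q * sw (2*n) (2*n) ^ k | q. q \<in> HBSO (2*n - 1)})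
         \<and> E_submodule (2*n) (HBSO_red (2*n - 1))"
proof -
  let ?S = "HBSO (2*n - 1)"
  let ?w = "Var (2*n)"
  have sww: "sw (2*n) (2*n) = ?w" using assms by (simp add: sw_def)
  have wH: "?w \<in> HBSO (2*n)" using assms by (intro HBSO_Var) auto
  have mm: "2*n - 1 \<le> 2*n" by simp
  have SH: "x \<in> ?S \<Longrightarrow> x \<in> HBSO (2*n)" for x using HBSO_mono[OF mm] by blast
  have V3: "Var 3 \<in> ?S" using assms by (intro HBSO_Var) auto
  have Q0add: "\<And>x y. Q0 (2*n) (x + y) = Q0 (2*n) x + Q0 (2*n) y" by (simp add: Q0_def Sq_add)
  have Q0der: "\<And>x y. x \<in> HBSO (2*n) \<Longrightarrow> y \<in> HBSO (2*n) \<Longrightarrow> Q0 (2*n) (x * y) = Q0 (2*n) x * y + x * Q0 (2*n) y"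
    by (simp add: Q0_def Sq1_deriv)
  have Q0one: "Q0 (2*n) 1 = 0" by (simp add: Q0_def Sq_one)
  have Q0gen: "\<And>i. i \<in> {2..2*n - 1} \<Longrightarrow> Q0 (2*n) (Var i) \<in> ?S" using Q0_gen[OF assms] by blast
  have Q0w: "Q0 (2*n) ?w = 0 * ?w" using Q0_w[OF assms] .
  have Q1add: "\<And>x y. Q1 (2*n) (x + y) = Q1 (2*n) x + Q1 (2*n) y" by (simp add: Q1_def Sq_add)
  have Q1der: "\<And>x y. x \<in> HBSO (2*n) \<Longrightarrow> y \<in> HBSO (2*n) \<Longrightarrow> Q1 (2*n) (x * y) = Q1 (2*n) x * y + x * Q1 (2*n) y"
    by (rule Q1_deriv)
  have Q1one: "Q1 (2*n) 1 = 0" by (simp add: Q1_def Sq_one)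
  have Q1gen: "\<And>i. i \<in> {2..2*n - 1} \<Longrightarrow> Q1 (2*n) (Var i) \<in> ?S" using Q1_gen[OF assms] by blast
  have Q1w: "Q1 (2*n) ?w = Var 3 * ?w" using Q1_w[OF assms] .
  have red0: "lk (Q0 (2*n) x) 0 = 0" for x by (simp add: Q0_def Sq_lookup0)
  have red1: "lk (Q1 (2*n) x) 0 = 0" for x by (simp add: Q1_def Sq_lookup0 lookup_add)

  have part1: "E_submodule (2*n) {q * sw (2*n) (2*n) ^ k | q. q \<in> ?S}" if k: "k \<ge> 1" for k
    unfolding E_submodule_def sww
  proof (intro conjI ballI)
    show "{q * ?w ^ k | q. q \<in> ?S} \<subseteq> HBSO_red (2*n)"
    proof
      fix p assume "p \<in> {q * ?w ^ k | q. q \<in> ?S}"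
      then obtain q where q: "q \<in> ?S" and p: "p = q * ?w ^ k" by blast
      have "p \<in> HBSO (2*n)" unfolding p using SH[OF q] wH by (intro HBSO_mult HBSO_power)
      moreover have "lk p 0 = 0" unfolding p using k by (simp add: lookup_mult_0 lookup_power_0 lk_Var0)
      ultimately show "p \<in> HBSO_red (2*n)" by (simp add: HBSO_red_def)
    qed
    show "0 \<in> {q * ?w ^ k | q. q \<in> ?S}" by (intro CollectI exI[of _ 0]) simp
  next
    fix x y assume "x \<in> {q * ?w ^ k | q. q \<in> ?S}" "y \<in> {q * ?w ^ k | q. q \<in> ?S}"
    then obtain q q' where "q \<in> ?S" "q' \<in> ?S" "x = q * ?w ^ k" "y = q' * ?w ^ k" by blast
    then show "x + y \<in> {q * ?w ^ k | q. q \<in> ?S}"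
      by (intro CollectI exI[of _ "q + q'"]) (simp add: distrib_right HBSO_add)
  next
    fix x assume "x \<in> {q * ?w ^ k | q. q \<in> ?S}"
    then obtain q where q: "q \<in> ?S" and x: "x = q * ?w ^ k" by blast
    obtain q0 where q0: "q0 \<in> ?S" "Q0 (2*n) (q * ?w ^ k) = q0 * ?w ^ k"
      using deriv_Mk[OF Q0add Q0der Q0one Q0gen mm wH HBSO_zero Q0w q] by blast
    obtain q1 where q1: "q1 \<in> ?S" "Q1 (2*n) (q * ?w ^ k) = q1 * ?w ^ k"
      using deriv_Mk[OF Q1add Q1der Q1one Q1gen mm wH V3 Q1w q] by blast
    show "Q0 (2*n) x \<in> {q * ?w ^ k | q. q \<in> ?S}" unfolding x using q0 by blast
    show "Q1 (2*n) x \<in> {q * ?w ^ k | q. q \<in> ?S}" unfolding x using q1 by blast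
  qed

  have part2: "E_submodule (2*n) (HBSO_red (2*n - 1))"
    unfolding E_submodule_def
  proof (intro conjI ballI)
    show "HBSO_red (2*n - 1) \<subseteq> HBSO_red (2*n)"
      using SH by (auto simp: HBSO_red_def)
    show "0 \<in> HBSO_red (2*n - 1)" by (simp add: HBSO_red_def)
  next
    fix x y assume "x \<in> HBSO_red (2*n - 1)" "y \<in> HBSO_red (2*n - 1)"
    then show "x + y \<in> HBSO_red (2*n - 1)" by (simp add: HBSO_red_def HBSO_add lookup_add)
  next
    fix x assume x: "x \<in> HBSO_red (2*n - 1)"
    then have xS: "x \<in> ?S" by (simp add: HBSO_red_def)
    show "Q0 (2*n) x \<in> HBSO_red (2*n - 1)"
      using deriv_closed[OF Q0add Q0der Q0one Q0gen mm xS] red0 by (simp add: HBSO_red_def)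
    show "Q1 (2*n) x \<in> HBSO_red (2*n - 1)"
      using deriv_closed[OF Q1add Q1der Q1one Q1gen mm xS] red1 by (simp add: HBSO_red_def)
  qed

  show ?thesis using part1 part2 by blast
qed

end
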